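(* Let $\Bbbk$ be a field and let $B$ be a filtered bialgebra over $\Bbbk$ (filtration $B_0\subset B_1\subset\cdots$, $\bigcup_n B_n=B$) such that $B_0$ is spanned by group-like elements. Let $I\subset B$ be the two-sided ideal generated by all elements $1-x$ with $x$ group-like. Then $I$ is also a two-sided coideal (i.e. $\Delta(I)\subset I\otimes B+B\otimes I$ and $\epsilon(I)=0$), and the quotient bialgebra $H:=B/I$, with the induced filtration $H_n:=$ image of $B_n$, is connected (i.e. $H_0=\Bbbk\cdot 1$); hence $H$ is a Hopf algebra.
   Context: A filtered bialgebra is a bialgebra $(B,m,1,\Delta,\epsilon)$ with an increasing sequence of subspaces $B_0\subset B_1\subset\cdots$, $\bigcup_n B_n=B$, such that $1\in B_0$, $B_iB_j\subset B_{i+j}$ and $\Delta(B_n)\subset\sum_{i+j=n}B_i\otimes B_j$. An element $x\neq 0$ is group-like if $\Delta(x)=x\otimes x$. *)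

theory Defs
  imports Main HOL.Vector_Spaces "HOL-Library.Function_Algebras"
begin

text \<open>Elements of B (x) B are modelled as finitely supported formal
  sums t :: 'b * 'b => 'k modulo the bilinearity relations; similarly for B (x) B (x) B.\<close>

definition fs_scale :: "'k::times \<Rightarrow> ('x \<Rightarrow> 'k) \<Rightarrow> ('x \<Rightarrow> 'k)" where
  "fs_scale c t = (\<lambda>p. c * t p)"

definition supp :: "('x \<Rightarrow> 'k::zero) \<Rightarrow> 'x set" where
  "supp t = {p. t p \<noteq> 0}"

definition delta :: "'x \<Rightarrow> ('x \<Rightarrow> 'k::{zero,one})" where
  "delta p = (\<lambda>q. if q = p then 1 else 0)"

definition rel2 :: "('k::field \<Rightarrow> 'b::ab_group_add \<Rightarrow> 'b) \<Rightarrow> ('b \<times> 'b \<Rightarrow> 'k) set" where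
  "rel2 sc =
     {delta (sc a x + x', y) - (fs_scale a (delta (x, y)) + delta (x', y)) | a x x' y. True}
   \<union> {delta (x, sc a y + y') - (fs_scale a (delta (x, y)) + delta (x, y')) | a x y y'. True}"

definition rel3 :: "('k::field \<Rightarrow> 'b::ab_group_add \<Rightarrow> 'b) \<Rightarrow> ('b \<times> 'b \<times> 'b \<Rightarrow> 'k) set" where
  "rel3 sc =
     {delta (sc a x + x', y, z) - (fs_scale a (delta (x, y, z)) + delta (x', y, z)) | a x x' y z. True}
   \<union> {delta (x, sc a y + y', z) - (fs_scale a (delta (x, y, z)) + delta (x, y', z)) | a x y y' z. True}
   \<union> {delta (x, y, sc a z + z') - (fs_scale a (delta (x, y, z)) + delta (x, y, z')) | a x y z z'. True}"

definition tens_eq2 :: "('k::field \<Rightarrow> 'b::ab_group_add \<Rightarrow> 'b) \<Rightarrow> ('b \<times> 'b \<Rightarrow> 'k) \<Rightarrow> ('b \<times> 'b \<Rightarrow> 'k) \<Rightarrow> bool" where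
  "tens_eq2 sc t u \<longleftrightarrow> t - u \<in> module.span fs_scale (rel2 sc)"

definition tens_eq3 :: "('k::field \<Rightarrow> 'b::ab_group_add \<Rightarrow> 'b) \<Rightarrow> ('b \<times> 'b \<times> 'b \<Rightarrow> 'k) \<Rightarrow> ('b \<times> 'b \<times> 'b \<Rightarrow> 'k) \<Rightarrow> bool" where
  "tens_eq3 sc t u \<longleftrightarrow> t - u \<in> module.span fs_scale (rel3 sc)"

text \<open>(Delta (x) id) and (id (x) Delta) applied to a formal sum.\<close>
definition tens_left :: "('b \<Rightarrow> ('b \<times> 'b \<Rightarrow> 'k::field)) \<Rightarrow> ('b \<times> 'b \<Rightarrow> 'k) \<Rightarrow> ('b \<times> 'b \<times> 'b \<Rightarrow> 'k)" where
  "tens_left D t = (\<Sum>p\<in>supp t. fs_scale (t p)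
      (\<lambda>(a, b, c). if c = snd p then D (fst p) (a, b) else 0))"

definition tens_right :: "('b \<Rightarrow> ('b \<times> 'b \<Rightarrow> 'k::field)) \<Rightarrow> ('b \<times> 'b \<Rightarrow> 'k) \<Rightarrow> ('b \<times> 'b \<times> 'b \<Rightarrow> 'k)" where
  "tens_right D t = (\<Sum>p\<in>supp t. fs_scale (t p)
      (\<lambda>(a, b, c). if a = fst p then D (snd p) (b, c) else 0))"

definition fs_mult :: "('b::times \<times> 'b \<Rightarrow> 'k::field) \<Rightarrow> ('b \<times> 'b \<Rightarrow> 'k) \<Rightarrow> ('b \<times> 'b \<Rightarrow> 'k)" where
  "fs_mult t u = (\<Sum>p\<in>supp t. \<Sum>q\<in>supp u.
      fs_scale (t p * u q) (delta (fst p * fst q, snd p * snd q)))"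

definition contract :: "('k::field \<Rightarrow> 'b::ab_group_add \<Rightarrow> 'b) \<Rightarrow> ('b \<Rightarrow> 'b \<Rightarrow> 'b) \<Rightarrow> ('b \<times> 'b \<Rightarrow> 'k) \<Rightarrow> 'b" where
  "contract sc \<phi> t = (\<Sum>p\<in>supp t. sc (t p) (\<phi> (fst p) (snd p)))"

definition bialgebra ::
  "('k::field \<Rightarrow> 'b::ring_1 \<Rightarrow> 'b) \<Rightarrow> ('b \<Rightarrow> ('b \<times> 'b \<Rightarrow> 'k)) \<Rightarrow> ('b \<Rightarrow> 'k) \<Rightarrow> bool" where
  "bialgebra sc D eps \<longleftrightarrow>
     vector_space sc
   \<and> (\<forall>c x y. sc c (x * y) = sc c x * y \<and> sc c (x * y) = x * sc c y)
   \<and> (\<forall>x. finite (supp (D x)))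
   \<and> (\<forall>a x y. tens_eq2 sc (D (sc a x + y)) (fs_scale a (D x) + D y))
   \<and> Vector_Spaces.linear sc (*) eps
   \<and> (\<forall>x. tens_eq3 sc (tens_left D (D x)) (tens_right D (D x)))
   \<and> (\<forall>x. contract sc (\<lambda>a b. sc (eps a) b) (D x) = x)
   \<and> (\<forall>x. contract sc (\<lambda>a b. sc (eps b) a) (D x) = x)
   \<and> (\<forall>x y. tens_eq2 sc (D (x * y)) (fs_mult (D x) (D y)))
   \<and> tens_eq2 sc (D 1) (delta (1, 1))
   \<and> (\<forall>x y. eps (x * y) = eps x * eps y)
   \<and> eps 1 = 1"

definition filtered_bialgebra ::
  "('k::field \<Rightarrow> 'b::ring_1 \<Rightarrow> 'b) \<Rightarrow> ('b \<Rightarrow> ('b \<times> 'b \<Rightarrow> 'k)) \<Rightarrow> ('b \<Rightarrow> 'k) \<Rightarrow> (nat \<Rightarrow> 'b set) \<Rightarrow> bool" where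
  "filtered_bialgebra sc D eps F \<longleftrightarrow>
     bialgebra sc D eps
   \<and> (\<forall>n. module.subspace sc (F n))
   \<and> (\<forall>n. F n \<subseteq> F (Suc n))
   \<and> (\<Union>n. F n) = UNIV
   \<and> 1 \<in> F 0
   \<and> (\<forall>i j x y. x \<in> F i \<longrightarrow> y \<in> F j \<longrightarrow> x * y \<in> F (i + j))
   \<and> (\<forall>n x. x \<in> F n \<longrightarrow>
        (\<exists>t. tens_eq2 sc t (D x) \<and> supp t \<subseteq> (\<Union>i\<le>n. F i \<times> F (n - i))))"

definition group_like :: "('k::field \<Rightarrow> 'b::ring_1 \<Rightarrow> 'b) \<Rightarrow> ('b \<Rightarrow> ('b \<times> 'b \<Rightarrow> 'k)) \<Rightarrow> 'b \<Rightarrow> bool" where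
  "group_like sc D x \<longleftrightarrow> x \<noteq> 0 \<and> tens_eq2 sc (D x) (delta (x, x))"

definition two_sided_ideal :: "('k::field \<Rightarrow> 'b::ring_1 \<Rightarrow> 'b) \<Rightarrow> 'b set \<Rightarrow> bool" where
  "two_sided_ideal sc I \<longleftrightarrow> module.subspace sc I \<and> (\<forall>a\<in>I. \<forall>b. a * b \<in> I \<and> b * a \<in> I)"

definition ideal_generated :: "('k::field \<Rightarrow> 'b::ring_1 \<Rightarrow> 'b) \<Rightarrow> 'b set \<Rightarrow> 'b set" where
  "ideal_generated sc S = \<Inter>{I. two_sided_ideal sc I \<and> S \<subseteq> I}"

definition two_sided_coideal ::
  "('k::field \<Rightarrow> 'b::ring_1 \<Rightarrow> 'b) \<Rightarrow> ('b \<Rightarrow> ('b \<times> 'b \<Rightarrow> 'k)) \<Rightarrow> ('b \<Rightarrow> 'k) \<Rightarrow> 'b set \<Rightarrow> bool" where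
  "two_sided_coideal sc D eps I \<longleftrightarrow>
     (\<forall>x\<in>I. \<exists>t. tens_eq2 sc t (D x) \<and> supp t \<subseteq> (I \<times> UNIV) \<union> (UNIV \<times> I))
   \<and> (\<forall>x\<in>I. eps x = 0)"

definition qcls :: "'b set \<Rightarrow> 'b::ab_group_add \<Rightarrow> 'b set" where
  "qcls I x = {x + y | y. y \<in> I}"

text \<open>The quotient bialgebra B/I has an antipode: a linear map S_H on B/I, represented by a
  linear map S on B with S(I) in I, such that m(S (x) id)Delta = eta eps = m(id (x) S)Delta
  holds in B/I.\<close>
definition quotient_has_antipode ::
  "('k::field \<Rightarrow> 'b::ring_1 \<Rightarrow> 'b) \<Rightarrow> ('b \<Rightarrow> ('b \<times> 'b \<Rightarrow> 'k)) \<Rightarrow> ('b \<Rightarrow> 'k) \<Rightarrow> 'b set \<Rightarrow> bool" where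
  "quotient_has_antipode sc D eps I \<longleftrightarrow>
     (\<exists>S. Vector_Spaces.linear sc sc S \<and> S ` I \<subseteq> I
        \<and> (\<forall>x. contract sc (\<lambda>a b. S a * b) (D x) - sc (eps x) 1 \<in> I)
        \<and> (\<forall>x. contract sc (\<lambda>a b. a * S b) (D x) - sc (eps x) 1 \<in> I))"

end

theory Submission
  imports Defs
begin



lemma fun_diff_apply[simp]: "(f - g) x = (f x - (g x :: 'a::minus))" by (simp add: fun_diff_def)
lemma fun_uminus_apply[simp]: "(- f) x = - (f x :: 'a::uminus)" by (simp add: fun_Compl_def)

lemma module_fs: "module (fs_scale :: 'k::field \<Rightarrow> ('x \<Rightarrow> 'k) \<Rightarrow> ('x \<Rightarrow> 'k))"
  by unfold_locales (auto simp: fs_scale_def fun_eq_iff algebra_simps)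

lemma supp_add: "supp (t + u) \<subseteq> supp t \<union> supp (u::_\<Rightarrow>'a::monoid_add)" by (auto simp: supp_def)
lemma supp_diff: "supp (t - u) \<subseteq> supp t \<union> supp (u::_\<Rightarrow>'a::group_add)" by (auto simp: supp_def)
lemma supp_uminus: "supp (- t) = supp (t::_\<Rightarrow>'a::ab_group_add)" by (auto simp: supp_def)
lemma supp_scale: "supp (fs_scale c t) \<subseteq> supp (t::_\<Rightarrow>'a::mult_zero)" by (auto simp: supp_def fs_scale_def)
lemma supp_delta: "supp (delta p :: _ \<Rightarrow> 'a::zero_neq_one) = {p}" by (auto simp: supp_def delta_def)
lemma supp_zero[simp]: "supp 0 = {}" by (auto simp: supp_def)

lemma fin_add: "finite (supp t) \<Longrightarrow> finite (supp u) \<Longrightarrow> finite (supp (t + (u::_\<Rightarrow>'a::monoid_add)))"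
  by (meson finite_UnI finite_subset supp_add)
lemma fin_diff: "finite (supp t) \<Longrightarrow> finite (supp u) \<Longrightarrow> finite (supp (t - (u::_\<Rightarrow>'a::group_add)))"
  by (meson finite_UnI finite_subset supp_diff)
lemma fin_scale: "finite (supp t) \<Longrightarrow> finite (supp (fs_scale c (t::_\<Rightarrow>'a::mult_zero)))"
  by (meson finite_subset supp_scale)
lemma fin_delta: "finite (supp (delta p :: _ \<Rightarrow> 'a::zero_neq_one))" by (simp add: supp_delta)
lemma fin_sum: "finite I \<Longrightarrow> (\<And>i. i \<in> I \<Longrightarrow> finite (supp (h i))) \<Longrightarrow> finite (supp (\<Sum>i\<in>I. h i :: _ \<Rightarrow> 'a::comm_monoid_add))"
proof (induction I rule: finite_induct)
  case (insert x F)
  then show ?case unfolding sum.insert[OF insert(1,2)] by (intro fin_add) auto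
qed simp

definition gc :: "('k::field \<Rightarrow> 'b::ab_group_add \<Rightarrow> 'b) \<Rightarrow> ('x \<Rightarrow> 'b) \<Rightarrow> ('x \<Rightarrow> 'k) \<Rightarrow> 'b" where
  "gc sc \<Phi> t = (\<Sum>p\<in>supp t. sc (t p) (\<Phi> p))"

context vector_space begin

lemma gc_superset: "finite A \<Longrightarrow> supp t \<subseteq> A \<Longrightarrow> gc scale \<Phi> t = (\<Sum>p\<in>A. t p *s \<Phi> p)"
  unfolding gc_def by (rule sum.mono_neutral_left) (auto simp: supp_def)

lemma gc_add: "finite (supp t) \<Longrightarrow> finite (supp u) \<Longrightarrow> gc scale \<Phi> (t + u) = gc scale \<Phi> t + gc scale \<Phi> u"
proof -
  assume ft: "finite (supp t)" and fu: "finite (supp u)"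
  let ?A = "supp t \<union> supp u"
  have "gc scale \<Phi> (t + u) = (\<Sum>p\<in>?A. (t + u) p *s \<Phi> p)" using ft fu supp_add[of t u] by (intro gc_superset) auto
  also have "\<dots> = (\<Sum>p\<in>?A. t p *s \<Phi> p) + (\<Sum>p\<in>?A. u p *s \<Phi> p)"
    by (simp add: scale_left_distrib sum.distrib)
  also have "\<dots> = gc scale \<Phi> t + gc scale \<Phi> u"
    using gc_superset[of ?A t \<Phi>] gc_superset[of ?A u \<Phi>] ft fu by simp
  finally show ?thesis .
qed

lemma gc_scale: "finite (supp t) \<Longrightarrow> gc scale \<Phi> (fs_scale c t) = c *s gc scale \<Phi> t"
proof -
  assume ft: "finite (supp t)"
  have "gc scale \<Phi> (fs_scale c t) = (\<Sum>p\<in>supp t. (fs_scale c t) p *s \<Phi> p)"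
    by (rule gc_superset[OF ft supp_scale])
  then have "gc scale \<Phi> (fs_scale c t) = (\<Sum>p\<in>supp t. (c * t p) *s \<Phi> p)" by (simp add: fs_scale_def mult.commute)
  then show ?thesis by (simp add: gc_def scale_sum_right mult.commute)
qed

lemma gc_uminus: "finite (supp t) \<Longrightarrow> gc scale \<Phi> (- t) = - gc scale \<Phi> t"
proof -
  assume ft: "finite (supp t)"
  have "- t = fs_scale (-1) t" by (auto simp: fs_scale_def)
  then show ?thesis using gc_scale[OF ft, of \<Phi> "-1"] by simp
qed

lemma gc_diff: "finite (supp t) \<Longrightarrow> finite (supp u) \<Longrightarrow> gc scale \<Phi> (t - u) = gc scale \<Phi> t - gc scale \<Phi> u"
proof -
  assume ft: "finite (supp t)" and fu: "finite (supp u)"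
  have "t - u = t + (- u)" by simp
  moreover have "finite (supp (-u))" using fu by (simp add: supp_uminus)
  ultimately show ?thesis using ft fu gc_add[OF ft, of "-u"] gc_uminus[OF fu] by simp
qed

lemma gc_zero[simp]: "gc scale \<Phi> 0 = 0" by (simp add: gc_def)

lemma gc_delta: "gc scale \<Phi> (delta p) = \<Phi> p"
  unfolding gc_def supp_delta by (simp add: delta_def)

lemma gc_sum: "finite I \<Longrightarrow> (\<And>i. i \<in> I \<Longrightarrow> finite (supp (h i))) \<Longrightarrow> gc scale \<Phi> (\<Sum>i\<in>I. h i) = (\<Sum>i\<in>I. gc scale \<Phi> (h i))"
proof (induction I rule: finite_induct)
  case (insert x F)
  have h1: "gc scale \<Phi> (h x + sum h F) = gc scale \<Phi> (h x) + gc scale \<Phi> (sum h F)"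
    by (rule gc_add) (use insert in \<open>auto intro: fin_sum\<close>)
  have h2: "gc scale \<Phi> (sum h F) = (\<Sum>i\<in>F. gc scale \<Phi> (h i))" using insert by auto
  show ?case unfolding sum.insert[OF insert(1,2)] h1 h2 ..
qed simp

lemma gc_fun_add: "gc scale (\<lambda>p. \<Phi> p + \<Psi> p) t = gc scale \<Phi> t + gc scale \<Psi> t"
  by (simp add: gc_def scale_right_distrib sum.distrib)
lemma gc_fun_uminus: "gc scale (\<lambda>p. - \<Phi> p) t = - gc scale \<Phi> t"
  by (simp add: gc_def sum_negf)
lemma gc_fun_diff: "gc scale (\<lambda>p. \<Phi> p - \<Psi> p) t = gc scale \<Phi> t - gc scale \<Psi> t"
  by (simp add: gc_def scale_right_diff_distrib sum_subtractf)
lemma gc_fun_scale: "gc scale (\<lambda>p. c *s \<Phi> p) t = c *s gc scale \<Phi> t"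
  by (simp add: gc_def scale_sum_right mult.commute)
lemma gc_fun_sum: "gc scale (\<lambda>p. \<Sum>k\<in>K. \<Phi> k p) t = (\<Sum>k\<in>K. gc scale (\<Phi> k) t)"
  by (simp add: gc_def scale_sum_right sum.swap[of _ K])
lemma gc_cong: "(\<And>p. p \<in> supp t \<Longrightarrow> \<Phi> p = \<Psi> p) \<Longrightarrow> gc scale \<Phi> t = gc scale \<Psi> t"
  by (simp add: gc_def)

lemma gc_span_sub:
  assumes "t \<in> module.span fs_scale R" and "subspace S" and "\<And>r. r \<in> R \<Longrightarrow> finite (supp r) \<and> gc scale \<Phi> r \<in> S"
  shows "finite (supp t) \<and> gc scale \<Phi> t \<in> S"
proof -
  interpret m: module "fs_scale :: 'a \<Rightarrow> ('x \<Rightarrow> 'a) \<Rightarrow> _" by (rule module_fs)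
  have "m.subspace {a. finite (supp a) \<and> gc scale \<Phi> a \<in> S}"
    unfolding m.subspace_def using assms(2)
    by (simp add: fin_add gc_add fin_scale gc_scale subspace_0 subspace_add subspace_scale)
  then show ?thesis using m.span_induct[OF assms(1), of "\<lambda>a. finite (supp a) \<and> gc scale \<Phi> a \<in> S"] assms(3) by blast
qed

lemma gc_span_zero:
  assumes "t \<in> module.span fs_scale R" and "\<And>r. r \<in> R \<Longrightarrow> finite (supp r) \<and> gc scale \<Phi> r = 0"
  shows "finite (supp t) \<and> gc scale \<Phi> t = 0"
  using gc_span_sub[OF assms(1) subspace_single_0, of \<Phi>] assms(2) by auto

lemma gc_in_sub: "subspace S \<Longrightarrow> (\<And>p. p \<in> supp t \<Longrightarrow> \<Phi> p \<in> S) \<Longrightarrow> gc scale \<Phi> t \<in> S"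
  unfolding gc_def by (intro subspace_sum subspace_scale) auto

lemma gc_embed:
  assumes "inj g" "\<And>q. s' (g q) = s q" "\<And>y. y \<notin> range g \<Longrightarrow> s' y = 0"
  shows "supp s' = g ` supp s" "gc scale \<Psi> s' = gc scale (\<lambda>q. \<Psi> (g q)) s"
proof -
  show ss: "supp s' = g ` supp s"
  proof
    show "supp s' \<subseteq> g ` supp s"
    proof
      fix y assume y: "y \<in> supp s'"
      then have "y \<in> range g" using assms(3) by (auto simp: supp_def)
      then obtain q where "y = g q" by auto
      then show "y \<in> g ` supp s" using y assms(2) by (auto simp: supp_def)
    qed
    show "g ` supp s \<subseteq> supp s'" using assms(2) by (auto simp: supp_def)
  qed
  show "gc scale \<Psi> s' = gc scale (\<lambda>q. \<Psi> (g q)) s"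
    unfolding gc_def ss using assms(1,2)
    by (subst sum.reindex) (auto intro: inj_on_subset)
qed

end



definition bil :: "('k::field \<Rightarrow> 'b::ab_group_add \<Rightarrow> 'b) \<Rightarrow> ('b \<Rightarrow> 'b \<Rightarrow> 'b) \<Rightarrow> bool" where
  "bil sc \<phi> \<longleftrightarrow> (\<forall>a x x' y. \<phi> (sc a x + x') y = sc a (\<phi> x y) + \<phi> x' y)
                \<and> (\<forall>a x y y'. \<phi> x (sc a y + y') = sc a (\<phi> x y) + \<phi> x y')"

definition tri :: "('k::field \<Rightarrow> 'b::ab_group_add \<Rightarrow> 'b) \<Rightarrow> ('b \<times> 'b \<times> 'b \<Rightarrow> 'b) \<Rightarrow> bool" where
  "tri sc \<Psi> \<longleftrightarrow> (\<forall>a x x' y z. \<Psi> (sc a x + x', y, z) = sc a (\<Psi> (x, y, z)) + \<Psi> (x', y, z))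
                \<and> (\<forall>a x y y' z. \<Psi> (x, sc a y + y', z) = sc a (\<Psi> (x, y, z)) + \<Psi> (x, y', z))
                \<and> (\<forall>a x y z z'. \<Psi> (x, y, sc a z + z') = sc a (\<Psi> (x, y, z)) + \<Psi> (x, y, z'))"

context vector_space begin

lemma contract_gc: "contract scale \<phi> t = gc scale (\<lambda>p. \<phi> (fst p) (snd p)) t"
  by (simp add: contract_def gc_def)

lemma rel2_gc: "bil scale \<phi> \<Longrightarrow> r \<in> rel2 scale \<Longrightarrow> finite (supp r) \<and> gc scale (\<lambda>p. \<phi> (fst p) (snd p)) r = 0"
  unfolding rel2_def bil_def
  by (auto simp: fin_diff fin_add fin_scale fin_delta gc_diff gc_add gc_scale gc_delta)

lemma rel3_gc: "tri scale \<Psi> \<Longrightarrow> r \<in> rel3 scale \<Longrightarrow> finite (supp r) \<and> gc scale \<Psi> r = 0"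
  unfolding rel3_def tri_def
  by (auto simp: fin_diff fin_add fin_scale fin_delta gc_diff gc_add gc_scale gc_delta)

lemma resp2:
  assumes "bil scale \<phi>" "tens_eq2 scale t u" "finite (supp u)"
  shows "finite (supp t) \<and> contract scale \<phi> t = contract scale \<phi> u"
proof -
  have "finite (supp (t - u)) \<and> gc scale (\<lambda>p. \<phi> (fst p) (snd p)) (t - u) = 0"
    using gc_span_zero[of "t - u" "rel2 scale" "\<lambda>p. \<phi> (fst p) (snd p)"] assms(2) rel2_gc[OF assms(1)]
    unfolding tens_eq2_def by blast
  moreover have "t = (t - u) + u" by (rule diff_add_cancel[symmetric])
  ultimately show ?thesis using assms(3) fin_add[of "t - u" u] gc_add[of "t - u" u]
    by (metis add_0 contract_gc)
qed

lemma resp3: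
  assumes "tri scale \<Psi>" "tens_eq3 scale t u" "finite (supp u)"
  shows "finite (supp t) \<and> gc scale \<Psi> t = gc scale \<Psi> u"
proof -
  have "finite (supp (t - u)) \<and> gc scale \<Psi> (t - u) = 0"
    using gc_span_zero[of "t - u" "rel3 scale" \<Psi>] assms(2) rel3_gc[OF assms(1)]
    unfolding tens_eq3_def by blast
  moreover have "t = (t - u) + u" by (rule diff_add_cancel[symmetric])
  ultimately show ?thesis using assms(3) fin_add[of "t - u" u] gc_add[of "t - u" u]
    by (metis add_0)
qed

lemma tens_left_gc:
  fixes D :: "'x \<Rightarrow> ('x \<times> 'x \<Rightarrow> 'a)"
  assumes ft: "finite (supp t)" and fD: "\<And>x. finite (supp (D x))"
  shows "finite (supp (tens_left D t)) \<and>
    gc scale \<Psi> (tens_left D t) = gc scale (\<lambda>p. gc scale (\<lambda>q. \<Psi> (fst q, snd q, snd p)) (D (fst p))) t"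
proof -
  define h where "h p = (\<lambda>(a, b, c). if c = snd (p::'x\<times>'x) then D (fst p) (a, b) else 0)" for p
  have e: "supp (h p) = (\<lambda>q. (fst q, snd q, snd p)) ` supp (D (fst p))"
     "gc scale \<Psi> (h p) = gc scale (\<lambda>q. \<Psi> (fst q, snd q, snd p)) (D (fst p))" for p
  proof -
    define g where "g = (\<lambda>q::'x\<times>'x. (fst q, snd q, snd p))"
    have a: "inj g" by (auto simp: inj_def g_def)
    have b: "\<And>q. h p (g q) = D (fst p) q" by (auto simp: h_def g_def)
    have c: "\<And>y. y \<notin> range g \<Longrightarrow> h p y = 0"
      by (auto simp: h_def g_def image_iff split: prod.splits)
    show "supp (h p) = (\<lambda>q. (fst q, snd q, snd p)) ` supp (D (fst p))"
      unfolding g_def[symmetric] by (rule gc_embed(1)[where g=g and s'="h p", OF a b c])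
    show "gc scale \<Psi> (h p) = gc scale (\<lambda>q. \<Psi> (fst q, snd q, snd p)) (D (fst p))"
      using gc_embed(2)[where g=g and s'="h p", OF a b c] by (simp add: g_def)
  qed
  have fh: "finite (supp (h p))" for p using e(1) fD by simp
  have tl: "tens_left D t = (\<Sum>p\<in>supp t. fs_scale (t p) (h p))"
    unfolding tens_left_def h_def ..
  have "gc scale \<Psi> (\<Sum>p\<in>supp t. fs_scale (t p) (h p)) = (\<Sum>p\<in>supp t. gc scale \<Psi> (fs_scale (t p) (h p)))"
    using ft fh by (intro gc_sum) (auto intro: fin_scale)
  also have "\<dots> = (\<Sum>p\<in>supp t. t p *s gc scale \<Psi> (h p))" using fh by (simp add: gc_scale)
  also have "\<dots> = gc scale (\<lambda>p. gc scale \<Psi> (h p)) t" by (simp only: gc_def[of scale _ t])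
  finally have 1: "gc scale \<Psi> (\<Sum>p\<in>supp t. fs_scale (t p) (h p)) = gc scale (\<lambda>p. gc scale \<Psi> (h p)) t" .
  have 2: "finite (supp (\<Sum>p\<in>supp t. fs_scale (t p) (h p)))"
    by (rule fin_sum) (use ft fh in \<open>auto intro: fin_scale\<close>)
  show ?thesis unfolding tl using 1 2 e(2) by presburger
qed

lemma tens_right_gc:
  fixes D :: "'x \<Rightarrow> ('x \<times> 'x \<Rightarrow> 'a)"
  assumes ft: "finite (supp t)" and fD: "\<And>x. finite (supp (D x))"
  shows "finite (supp (tens_right D t)) \<and>
    gc scale \<Psi> (tens_right D t) = gc scale (\<lambda>p. gc scale (\<lambda>q. \<Psi> (fst p, fst q, snd q)) (D (snd p))) t"
proof -
  define h where "h p = (\<lambda>(a, b, c). if a = fst (p::'x\<times>'x) then D (snd p) (b, c) else 0)" for p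
  have e: "supp (h p) = (\<lambda>q. (fst p, fst q, snd q)) ` supp (D (snd p))"
     "gc scale \<Psi> (h p) = gc scale (\<lambda>q. \<Psi> (fst p, fst q, snd q)) (D (snd p))" for p
  proof -
    define g where "g = (\<lambda>q::'x\<times>'x. (fst p, fst q, snd q))"
    have a: "inj g" by (auto simp: inj_def g_def)
    have b: "\<And>q. h p (g q) = D (snd p) q" by (auto simp: h_def g_def)
    have c: "\<And>y. y \<notin> range g \<Longrightarrow> h p y = 0"
      by (auto simp: h_def g_def image_iff split: prod.splits)
    show "supp (h p) = (\<lambda>q. (fst p, fst q, snd q)) ` supp (D (snd p))"
      unfolding g_def[symmetric] by (rule gc_embed(1)[where g=g and s'="h p", OF a b c])
    show "gc scale \<Psi> (h p) = gc scale (\<lambda>q. \<Psi> (fst p, fst q, snd q)) (D (snd p))"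
      using gc_embed(2)[where g=g and s'="h p", OF a b c] by (simp add: g_def)
  qed
  have fh: "finite (supp (h p))" for p using e(1) fD by simp
  have tl: "tens_right D t = (\<Sum>p\<in>supp t. fs_scale (t p) (h p))"
    unfolding tens_right_def h_def ..
  have "gc scale \<Psi> (\<Sum>p\<in>supp t. fs_scale (t p) (h p)) = (\<Sum>p\<in>supp t. gc scale \<Psi> (fs_scale (t p) (h p)))"
    using ft fh by (intro gc_sum) (auto intro: fin_scale)
  also have "\<dots> = (\<Sum>p\<in>supp t. t p *s gc scale \<Psi> (h p))" using fh by (simp add: gc_scale)
  also have "\<dots> = gc scale (\<lambda>p. gc scale \<Psi> (h p)) t" by (simp only: gc_def[of scale _ t])
  finally have 1: "gc scale \<Psi> (\<Sum>p\<in>supp t. fs_scale (t p) (h p)) = gc scale (\<lambda>p. gc scale \<Psi> (h p)) t" .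
  have 2: "finite (supp (\<Sum>p\<in>supp t. fs_scale (t p) (h p)))"
    by (rule fin_sum) (use ft fh in \<open>auto intro: fin_scale\<close>)
  show ?thesis unfolding tl using 1 2 e(2) by presburger
qed

end




lemma vs_fs: "vector_space (fs_scale :: 'k::field \<Rightarrow> ('x \<Rightarrow> 'k) \<Rightarrow> ('x \<Rightarrow> 'k))"
  using module_fs module_iff_vector_space by blast

lemma fs_mult_gc1:
  "fs_mult t u = gc fs_scale (\<lambda>p. gc fs_scale (\<lambda>q. delta (fst p * fst q, snd p * snd q)) u) (t :: 'b::times \<times> 'b \<Rightarrow> 'k::field)"
proof -
  interpret m: module "fs_scale :: 'k \<Rightarrow> ('b \<times> 'b \<Rightarrow> 'k) \<Rightarrow> _" by (rule module_fs)
  show ?thesis by (simp add: fs_mult_def gc_def m.scale_sum_right m.scale_scale)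
qed

lemma fs_mult_gc2:
  "fs_mult t u = gc fs_scale (\<lambda>q. gc fs_scale (\<lambda>p. delta (fst p * fst q, snd p * snd q)) t) (u :: 'b::times \<times> 'b \<Rightarrow> 'k::field)"
proof -
  interpret m: module "fs_scale :: 'k \<Rightarrow> ('b \<times> 'b \<Rightarrow> 'k) \<Rightarrow> _" by (rule module_fs)
  show ?thesis unfolding fs_mult_def gc_def m.scale_sum_right m.scale_scale
    by (subst sum.swap) (simp add: mult.commute)
qed

lemma fs_mult_resp1:
  fixes sc :: "'k::field \<Rightarrow> 'b::ring_1 \<Rightarrow> 'b"
  assumes ml: "\<And>c x y. sc c x * y = sc c (x * y)"
    and te: "tens_eq2 sc t t'" and ft': "finite (supp t')"
  shows "tens_eq2 sc (fs_mult t u) (fs_mult t' u) \<and> finite (supp t)"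
proof -
  interpret fv: vector_space "fs_scale :: 'k \<Rightarrow> ('b \<times> 'b \<Rightarrow> 'k) \<Rightarrow> _" by (rule vs_fs)
  define \<Phi> where "\<Phi> p = gc fs_scale (\<lambda>q. delta (fst p * fst q, snd p * snd q)) u" for p :: "'b \<times> 'b"
  have rel: "finite (supp r) \<and> gc fs_scale \<Phi> r \<in> fv.span (rel2 sc)" if r: "r \<in> rel2 sc" for r
  proof -
    from r consider (L) a x x' y where "r = delta (sc a x + x', y) - (fs_scale a (delta (x, y)) + delta (x', y))"
      | (R) a x y y' where "r = delta (x, sc a y + y') - (fs_scale a (delta (x, y)) + delta (x, y'))"
      unfolding rel2_def by blast
    then show ?thesis
    proof cases
      case L
      have "gc fs_scale \<Phi> r = gc fs_scale (\<lambda>q. delta (sc a (x * fst q) + x' * fst q, y * snd q)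
           - (fs_scale a (delta (x * fst q, y * snd q)) + delta (x' * fst q, y * snd q))) u"
        unfolding L by (simp add: fin_diff fin_add fin_scale fin_delta fv.gc_diff fv.gc_add fv.gc_scale fv.gc_delta
           fv.gc_fun_diff fv.gc_fun_add fv.gc_fun_scale \<Phi>_def distrib_right ml)
      also have "\<dots> \<in> fv.span (rel2 sc)"
        by (intro fv.gc_in_sub fv.subspace_span fv.span_base) (unfold rel2_def, blast)
      finally show ?thesis unfolding L by (simp add: fin_diff fin_add fin_scale fin_delta)
    next
      case R
      have "gc fs_scale \<Phi> r = gc fs_scale (\<lambda>q. delta (x * fst q, sc a (y * snd q) + y' * snd q)
           - (fs_scale a (delta (x * fst q, y * snd q)) + delta (x * fst q, y' * snd q))) u"
        unfolding R by (simp add: fin_diff fin_add fin_scale fin_delta fv.gc_diff fv.gc_add fv.gc_scale fv.gc_delta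
           fv.gc_fun_diff fv.gc_fun_add fv.gc_fun_scale \<Phi>_def distrib_right ml)
      also have "\<dots> \<in> fv.span (rel2 sc)"
        by (intro fv.gc_in_sub fv.subspace_span fv.span_base) (unfold rel2_def, blast)
      finally show ?thesis unfolding R by (simp add: fin_diff fin_add fin_scale fin_delta)
    qed
  qed
  have d: "finite (supp (t - t')) \<and> gc fs_scale \<Phi> (t - t') \<in> fv.span (rel2 sc)"
    using fv.gc_span_sub[of "t - t'" "rel2 sc" "fv.span (rel2 sc)" \<Phi>] te rel
    unfolding tens_eq2_def by blast
  have ft: "finite (supp t)" using fin_add[of "t - t'" t'] d ft' by simp
  have "fs_mult t u - fs_mult t' u = gc fs_scale \<Phi> (t - t')"
    unfolding fs_mult_gc1 \<Phi>_def using ft ft' by (simp add: fv.gc_diff)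
  then show ?thesis using d ft unfolding tens_eq2_def by simp
qed

lemma fs_mult_resp2:
  fixes sc :: "'k::field \<Rightarrow> 'b::ring_1 \<Rightarrow> 'b"
  assumes mr: "\<And>c x y. x * sc c y = sc c (x * y)"
    and te: "tens_eq2 sc u u'" and fu': "finite (supp u')"
  shows "tens_eq2 sc (fs_mult t u) (fs_mult t u') \<and> finite (supp u)"
proof -
  interpret fv: vector_space "fs_scale :: 'k \<Rightarrow> ('b \<times> 'b \<Rightarrow> 'k) \<Rightarrow> _" by (rule vs_fs)
  define \<Phi> where "\<Phi> q = gc fs_scale (\<lambda>p. delta (fst p * fst q, snd p * snd q)) t" for q :: "'b \<times> 'b"
  have rel: "finite (supp r) \<and> gc fs_scale \<Phi> r \<in> fv.span (rel2 sc)" if r: "r \<in> rel2 sc" for r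
  proof -
    from r consider (L) a x x' y where "r = delta (sc a x + x', y) - (fs_scale a (delta (x, y)) + delta (x', y))"
      | (R) a x y y' where "r = delta (x, sc a y + y') - (fs_scale a (delta (x, y)) + delta (x, y'))"
      unfolding rel2_def by blast
    then show ?thesis
    proof cases
      case L
      have "gc fs_scale \<Phi> r = gc fs_scale (\<lambda>p. delta (sc a (fst p * x) + fst p * x', snd p * y)
           - (fs_scale a (delta (fst p * x, snd p * y)) + delta (fst p * x', snd p * y))) t"
        unfolding L by (simp add: fin_diff fin_add fin_scale fin_delta fv.gc_diff fv.gc_add fv.gc_scale fv.gc_delta
           fv.gc_fun_diff fv.gc_fun_add fv.gc_fun_scale \<Phi>_def distrib_left mr)
      also have "\<dots> \<in> fv.span (rel2 sc)"
        by (intro fv.gc_in_sub fv.subspace_span fv.span_base) (unfold rel2_def, blast)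
      finally show ?thesis unfolding L by (simp add: fin_diff fin_add fin_scale fin_delta)
    next
      case R
      have "gc fs_scale \<Phi> r = gc fs_scale (\<lambda>p. delta (fst p * x, sc a (snd p * y) + snd p * y')
           - (fs_scale a (delta (fst p * x, snd p * y)) + delta (fst p * x, snd p * y'))) t"
        unfolding R by (simp add: fin_diff fin_add fin_scale fin_delta fv.gc_diff fv.gc_add fv.gc_scale fv.gc_delta
           fv.gc_fun_diff fv.gc_fun_add fv.gc_fun_scale \<Phi>_def distrib_left mr)
      also have "\<dots> \<in> fv.span (rel2 sc)"
        by (intro fv.gc_in_sub fv.subspace_span fv.span_base) (unfold rel2_def, blast)
      finally show ?thesis unfolding R by (simp add: fin_diff fin_add fin_scale fin_delta)
    qed
  qed
  have d: "finite (supp (u - u')) \<and> gc fs_scale \<Phi> (u - u') \<in> fv.span (rel2 sc)"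
    using fv.gc_span_sub[of "u - u'" "rel2 sc" "fv.span (rel2 sc)" \<Phi>] te rel
    unfolding tens_eq2_def by blast
  have fu: "finite (supp u)" using fin_add[of "u - u'" u'] d fu' by simp
  have "fs_mult t u - fs_mult t u' = gc fs_scale \<Phi> (u - u')"
    unfolding fs_mult_gc2 \<Phi>_def using fu fu' by (simp add: fv.gc_diff)
  then show ?thesis using d fu unfolding tens_eq2_def by simp
qed

lemma sum_fun_apply: "(\<Sum>i\<in>I. f i) x = (\<Sum>i\<in>I. f i x :: 'a::comm_monoid_add)"
  by (induction I rule: infinite_finite_induct) auto

lemma supp_fs_mult:
  "supp (fs_mult t u) \<subseteq> {(fst p * fst q, snd p * snd q) | p q. p \<in> supp t \<and> q \<in> supp u}"
proof
  fix z assume z: "z \<in> supp (fs_mult t u)"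
  show "z \<in> {(fst p * fst q, snd p * snd q) | p q. p \<in> supp t \<and> q \<in> supp u}"
  proof (rule ccontr)
    assume nz: "z \<notin> {(fst p * fst q, snd p * snd q) | p q. p \<in> supp t \<and> q \<in> supp u}"
    have "fs_mult t u z = (\<Sum>p\<in>supp t. \<Sum>q\<in>supp u. (t p * u q) * delta (fst p * fst q, snd p * snd q) z)"
      unfolding fs_mult_def by (simp add: fs_scale_def sum_fun_apply)
    also have "\<dots> = 0" using nz by (intro sum.neutral ballI) (auto simp: delta_def)
    finally show False using z by (simp add: supp_def)
  qed
qed




locale fb = vs: vector_space sc
  for sc :: "'k::field \<Rightarrow> 'b::ring_1 \<Rightarrow> 'b" +
  fixes D :: "'b \<Rightarrow> ('b \<times> 'b \<Rightarrow> 'k)" and eps :: "'b \<Rightarrow> 'k" and F :: "nat \<Rightarrow> 'b set"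
  assumes fbi: "filtered_bialgebra sc D eps F"
    and G0: "\<exists>G. (\<forall>x\<in>G. group_like sc D x) \<and> F 0 = module.span sc G"
begin

sublocale fv: vector_space "fs_scale :: 'k \<Rightarrow> ('b \<times> 'b \<Rightarrow> 'k) \<Rightarrow> ('b \<times> 'b \<Rightarrow> 'k)"
  by (rule vs_fs)

lemma bia: "bialgebra sc D eps" using fbi by (simp add: filtered_bialgebra_def)
lemma mlr: "\<forall>c x y. sc c (x * y) = sc c x * y \<and> sc c (x * y) = x * sc c y"
  using bia unfolding bialgebra_def by blast
lemma ml: "sc c x * y = sc c (x * y)" using mlr by simp
lemma mr: "x * sc c y = sc c (x * y)"
proof -
  have "sc c (x * y) = x * sc c y" using mlr by blast
  then show ?thesis by simp
qed
lemma Dfin: "finite (supp (D x))" using bia by (simp add: bialgebra_def)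
lemma Dlin: "tens_eq2 sc (D (sc a x + y)) (fs_scale a (D x) + D y)" using bia by (simp add: bialgebra_def)
lemma eps_lin: "Vector_Spaces.linear sc (*) eps" using bia by (simp add: bialgebra_def)
lemma eps_add: "eps (x + y) = eps x + eps y" and eps_scale: "eps (sc c x) = c * eps x"
  using eps_lin by (simp_all add: linear_iff)
lemma coass: "tens_eq3 sc (tens_left D (D x)) (tens_right D (D x))" using bia by (simp add: bialgebra_def)
lemma counitL: "contract sc (\<lambda>a b. sc (eps a) b) (D x) = x" using bia by (simp add: bialgebra_def)
lemma counitR: "contract sc (\<lambda>a b. sc (eps b) a) (D x) = x" using bia by (simp add: bialgebra_def)
lemma Dmult: "tens_eq2 sc (D (x * y)) (fs_mult (D x) (D y))" using bia by (simp add: bialgebra_def)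
lemma D1: "tens_eq2 sc (D 1) (delta (1, 1))" using bia by (simp add: bialgebra_def)
lemma eps_mult: "eps (x * y) = eps x * eps y" using bia by (simp add: bialgebra_def)
lemma eps1: "eps 1 = 1" using bia by (simp add: bialgebra_def)
lemma Fsub: "vs.subspace (F n)" using fbi by (simp add: filtered_bialgebra_def)
lemma Fsuc: "F n \<subseteq> F (Suc n)" using fbi by (simp add: filtered_bialgebra_def)
lemma Funiv: "\<exists>n. x \<in> F n"
proof -
  have "x \<in> (\<Union>n. F n)" using fbi unfolding filtered_bialgebra_def by simp
  then show ?thesis by simp
qed
lemma one_F0: "1 \<in> F 0" using fbi by (simp add: filtered_bialgebra_def)
lemma Ffilt: "x \<in> F n \<Longrightarrow> \<exists>t. tens_eq2 sc t (D x) \<and> supp t \<subseteq> (\<Union>i\<le>n. F i \<times> F (n - i))"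
proof -
  assume x: "x \<in> F n"
  have "\<forall>n x. x \<in> F n \<longrightarrow> (\<exists>t. tens_eq2 sc t (D x) \<and> supp t \<subseteq> (\<Union>i\<le>n. F i \<times> F (n - i)))"
    using fbi unfolding filtered_bialgebra_def by (elim conjE)
  then show ?thesis using x by blast
qed
lemma Fmono: "i \<le> n \<Longrightarrow> F i \<subseteq> F n"
  by (rule lift_Suc_mono_le[of F, OF Fsuc])

lemma eps0: "eps 0 = 0" using eps_scale[of 0 0] by simp

lemma te_refl: "tens_eq2 sc t t" unfolding tens_eq2_def by (simp add: fv.span_zero)
lemma te_sym: "tens_eq2 sc t u \<Longrightarrow> tens_eq2 sc u t"
  unfolding tens_eq2_def using fv.span_neg by fastforce
lemma te_trans: "tens_eq2 sc t u \<Longrightarrow> tens_eq2 sc u w \<Longrightarrow> tens_eq2 sc t w"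
  unfolding tens_eq2_def using fv.span_add by fastforce
lemma te_add: "tens_eq2 sc t t' \<Longrightarrow> tens_eq2 sc u u' \<Longrightarrow> tens_eq2 sc (t + u) (t' + u')"
proof -
  assume "tens_eq2 sc t t'" "tens_eq2 sc u u'"
  moreover have "(t + u) - (t' + u') = (t - t') + (u - u')" by (simp add: algebra_simps)
  ultimately show ?thesis unfolding tens_eq2_def by (metis fv.span_add)
qed
lemma te_scale: "tens_eq2 sc t t' \<Longrightarrow> tens_eq2 sc (fs_scale c t) (fs_scale c t')"
proof -
  assume "tens_eq2 sc t t'"
  moreover have "fs_scale c t - fs_scale c t' = fs_scale c (t - t')" by (simp add: fv.scale_right_diff_distrib)
  ultimately show ?thesis unfolding tens_eq2_def by (metis fv.span_scale)
qed
lemma te_relL: "tens_eq2 sc (delta (sc a x + x', y)) (fs_scale a (delta (x, y)) + delta (x', y))"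
  unfolding tens_eq2_def by (rule fv.span_base) (auto simp: rel2_def)
lemma te_relR: "tens_eq2 sc (delta (x, sc a y + y')) (fs_scale a (delta (x, y)) + delta (x, y'))"
  unfolding tens_eq2_def by (rule fv.span_base) (unfold rel2_def, blast)

lemma bil0: "bil sc (\<lambda>a b. 0)" by (simp add: bil_def)
lemma te_fin: "tens_eq2 sc t u \<Longrightarrow> finite (supp u) \<Longrightarrow> finite (supp t)"
  using vs.resp2[OF bil0] by blast

lemma D0: "tens_eq2 sc 0 (D 0)"
proof -
  have "tens_eq2 sc (D 0) (D 0 + D 0)" using Dlin[of 1 0 0] by simp
  then have "D 0 - (D 0 + D 0) \<in> fv.span (rel2 sc)" unfolding tens_eq2_def .
  then have "- (D 0 - (D 0 + D 0)) \<in> fv.span (rel2 sc)" by (rule fv.span_neg)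
  then show ?thesis unfolding tens_eq2_def by (simp add: fv.span_neg)
qed

definition lin :: "('b \<Rightarrow> 'b) \<Rightarrow> bool" where
  "lin u \<longleftrightarrow> (\<forall>c x y. u (sc c x + y) = sc c (u x) + u y)"

lemma lin_add: "lin u \<Longrightarrow> u (x + y) = u x + u y"
  unfolding lin_def by (metis vs.scale_one)
lemma lin_0: "lin u \<Longrightarrow> u 0 = 0"
  using lin_add[of u 0 0] by simp
lemma lin_scale: "lin u \<Longrightarrow> u (sc c x) = sc c (u x)"
  unfolding lin_def using lin_0 by (metis add_0_right lin_def)
lemma lin_neg: "lin u \<Longrightarrow> u (- x) = - u x"
  using lin_scale[of u "-1" x] by simp
lemma lin_diff: "lin u \<Longrightarrow> u (x - y) = u x - u y"
  using lin_add[of u x "- y"] lin_neg[of u y] by simp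
lemma lin_sum: "lin u \<Longrightarrow> u (\<Sum>i\<in>A. f i) = (\<Sum>i\<in>A. u (f i))"
  by (induction A rule: infinite_finite_induct) (auto simp: lin_0 lin_add)
lemma linI: "(\<And>x y. u (x + y) = u x + u y) \<Longrightarrow> (\<And>c x. u (sc c x) = sc c (u x)) \<Longrightarrow> lin u"
  unfolding lin_def by simp
lemma lin_gc: "lin u \<Longrightarrow> u (gc sc \<Phi> t) = gc sc (\<lambda>p. u (\<Phi> p)) t"
  unfolding gc_def by (simp add: lin_sum lin_scale)

lemma gc_multR: "gc sc \<Phi> t * y = gc sc (\<lambda>p. \<Phi> p * y) t"
  unfolding gc_def by (simp add: sum_distrib_right ml)
lemma gc_multL: "y * gc sc \<Phi> t = gc sc (\<lambda>p. y * \<Phi> p) t"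
  unfolding gc_def by (simp add: sum_distrib_left mr)

definition conv :: "('b \<Rightarrow> 'b) \<Rightarrow> ('b \<Rightarrow> 'b) \<Rightarrow> 'b \<Rightarrow> 'b" where
  "conv u v x = contract sc (\<lambda>a b. u a * v b) (D x)"

lemma conv_gc: "conv u v x = gc sc (\<lambda>p. u (fst p) * v (snd p)) (D x)"
  unfolding conv_def vs.contract_gc ..

lemma bil_mult: "lin u \<Longrightarrow> lin v \<Longrightarrow> bil sc (\<lambda>a b. u a * v b)"
  by (simp add: bil_def lin_def distrib_left distrib_right ml mr)

lemma conv_alt:
  assumes "lin u" "lin v" "tens_eq2 sc t (D x)"
  shows "conv u v x = gc sc (\<lambda>p. u (fst p) * v (snd p)) t \<and> finite (supp t)"
  using vs.resp2[OF bil_mult[OF assms(1,2)] assms(3) Dfin] unfolding conv_def vs.contract_gc by simp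

lemma contract_Dlin:
  assumes "bil sc \<phi>"
  shows "contract sc \<phi> (D (sc a x + y)) = sc a (contract sc \<phi> (D x)) + contract sc \<phi> (D y)"
proof -
  have f: "finite (supp (fs_scale a (D x) + D y))" by (simp add: fin_add fin_scale Dfin)
  have "contract sc \<phi> (D (sc a x + y)) = contract sc \<phi> (fs_scale a (D x) + D y)"
    using vs.resp2[OF assms Dlin f] by simp
  also have "\<dots> = sc a (contract sc \<phi> (D x)) + contract sc \<phi> (D y)"
    unfolding vs.contract_gc by (simp add: vs.gc_add vs.gc_scale fin_scale Dfin)
  finally show ?thesis .
qed

lemma lin_conv: "lin u \<Longrightarrow> lin v \<Longrightarrow> lin (conv u v)"
  unfolding lin_def[of "conv u v"] conv_def using contract_Dlin[OF bil_mult] by blast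

lemma conv_diffL: "conv (\<lambda>y. u y - u' y) v x = conv u v x - conv u' v x"
  unfolding conv_gc by (simp add: left_diff_distrib vs.gc_fun_diff)
lemma conv_diffR: "conv u (\<lambda>y. v y - v' y) x = conv u v x - conv u v' x"
  unfolding conv_gc by (simp add: right_diff_distrib vs.gc_fun_diff)
lemma conv_sumL: "conv (\<lambda>y. \<Sum>k\<in>K. u k y) v x = (\<Sum>k\<in>K. conv (u k) v x)"
  unfolding conv_gc by (simp add: sum_distrib_right vs.gc_fun_sum)
lemma conv_sumR: "conv u (\<lambda>y. \<Sum>k\<in>K. v k y) x = (\<Sum>k\<in>K. conv u (v k) x)"
  unfolding conv_gc by (simp add: sum_distrib_left vs.gc_fun_sum)

definition ue :: "'b \<Rightarrow> 'b" where "ue x = sc (eps x) 1"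

lemma lin_ue: "lin ue"
  unfolding lin_def ue_def by (simp add: eps_add eps_scale vs.scale_left_distrib)

lemma conv_unitR: "lin u \<Longrightarrow> conv u ue = u"
proof
  fix x assume u: "lin u"
  have "conv u ue x = gc sc (\<lambda>p. u (sc (eps (snd p)) (fst p))) (D x)"
    unfolding conv_gc ue_def by (simp add: mr lin_scale[OF u])
  also have "\<dots> = u (gc sc (\<lambda>p. sc (eps (snd p)) (fst p)) (D x))" by (simp add: lin_gc[OF u])
  also have "\<dots> = u x" using counitR[of x] unfolding vs.contract_gc by simp
  finally show "conv u ue x = u x" .
qed

lemma conv_unitL: "lin u \<Longrightarrow> conv ue u = u"
proof
  fix x assume u: "lin u"
  have "conv ue u x = gc sc (\<lambda>p. u (sc (eps (fst p)) (snd p))) (D x)"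
    unfolding conv_gc ue_def by (simp add: ml lin_scale[OF u])
  also have "\<dots> = u (gc sc (\<lambda>p. sc (eps (fst p)) (snd p)) (D x))" by (simp add: lin_gc[OF u])
  also have "\<dots> = u x" using counitL[of x] unfolding vs.contract_gc by simp
  finally show "conv ue u x = u x" .
qed

lemma conv_assoc:
  assumes u: "lin u" and v: "lin v" and w: "lin w"
  shows "conv (conv u v) w = conv u (conv v w)"
proof
  fix x
  define \<Psi> where "\<Psi> z = u (fst z) * v (fst (snd z)) * w (snd (snd z))" for z :: "'b \<times> 'b \<times> 'b"
  have tri: "tri sc \<Psi>" using u v w
    by (simp add: tri_def \<Psi>_def lin_def distrib_left distrib_right ml mr)
  have l: "finite (supp (tens_left D (D x))) \<and> gc sc \<Psi> (tens_left D (D x)) =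
      gc sc (\<lambda>p. gc sc (\<lambda>q. \<Psi> (fst q, snd q, snd p)) (D (fst p))) (D x)"
    by (rule vs.tens_left_gc[OF Dfin Dfin])
  have r: "finite (supp (tens_right D (D x))) \<and> gc sc \<Psi> (tens_right D (D x)) =
      gc sc (\<lambda>p. gc sc (\<lambda>q. \<Psi> (fst p, fst q, snd q)) (D (snd p))) (D x)"
    by (rule vs.tens_right_gc[OF Dfin Dfin])
  have e: "gc sc \<Psi> (tens_left D (D x)) = gc sc \<Psi> (tens_right D (D x))"
    using vs.resp3[OF tri coass] r by blast
  have "conv (conv u v) w x = gc sc (\<lambda>p. gc sc (\<lambda>q. \<Psi> (fst q, snd q, snd p)) (D (fst p))) (D x)"
    unfolding conv_gc by (simp add: gc_multR \<Psi>_def)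
  also have "\<dots> = gc sc (\<lambda>p. gc sc (\<lambda>q. \<Psi> (fst p, fst q, snd q)) (D (snd p))) (D x)"
    using l r e by simp
  also have "\<dots> = conv u (conv v w) x"
    unfolding conv_gc by (simp add: gc_multL \<Psi>_def mult.assoc)
  finally show "conv (conv u v) w x = conv u (conv v w) x" .
qed

end



context fb begin

definition I :: "'b set" where "I = ideal_generated sc {1 - x | x. group_like sc D x}"

lemma ideal_I: "two_sided_ideal sc I"
  unfolding I_def ideal_generated_def two_sided_ideal_def
  by (auto intro!: vs.subspace_Inter)

lemma Isub: "vs.subspace I" using ideal_I by (simp add: two_sided_ideal_def)
lemma I_multR: "a \<in> I \<Longrightarrow> a * b \<in> I" using ideal_I by (simp add: two_sided_ideal_def)
lemma I_multL: "a \<in> I \<Longrightarrow> b * a \<in> I" using ideal_I by (simp add: two_sided_ideal_def)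
lemma gen_I: "group_like sc D g \<Longrightarrow> 1 - g \<in> I"
  unfolding I_def ideal_generated_def by blast
lemma I_min: "two_sided_ideal sc J \<Longrightarrow> (\<And>g. group_like sc D g \<Longrightarrow> 1 - g \<in> J) \<Longrightarrow> I \<subseteq> J"
  unfolding I_def ideal_generated_def by blast

lemma I_0: "0 \<in> I" using Isub vs.subspace_0 by blast
lemma I_add: "x \<in> I \<Longrightarrow> y \<in> I \<Longrightarrow> x + y \<in> I" using Isub vs.subspace_add by blast
lemma I_diff: "x \<in> I \<Longrightarrow> y \<in> I \<Longrightarrow> x - y \<in> I" using Isub vs.subspace_diff by blast
lemma I_neg: "x \<in> I \<Longrightarrow> - x \<in> I" using Isub vs.subspace_neg by blast
lemma I_scale: "x \<in> I \<Longrightarrow> sc c x \<in> I" using Isub vs.subspace_scale by blast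
lemma I_sum: "(\<And>i. i \<in> A \<Longrightarrow> f i \<in> I) \<Longrightarrow> (\<Sum>i\<in>A. f i) \<in> I" using Isub vs.subspace_sum by blast

lemma bil_epsR: "bil sc (\<lambda>a b. sc (eps b) a)"
  by (simp add: bil_def eps_add eps_scale vs.scale_left_distrib vs.scale_right_distrib vs.scale_scale)

lemma eps_group: "group_like sc D g \<Longrightarrow> eps g = 1"
proof -
  assume g: "group_like sc D g"
  then have ne: "g \<noteq> 0" and te: "tens_eq2 sc (D g) (delta (g, g))" by (auto simp: group_like_def)
  have "g = contract sc (\<lambda>a b. sc (eps b) a) (D g)" using counitR by simp
  also have "\<dots> = contract sc (\<lambda>a b. sc (eps b) a) (delta (g, g))"
    using vs.resp2[OF bil_epsR te fin_delta] by simp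
  also have "\<dots> = sc (eps g) g" unfolding vs.contract_gc vs.gc_delta by simp
  finally have "sc (eps g) g = sc 1 g" by simp
  then have "eps g = 1 \<or> g = 0" by (rule vs.scale_cancel_right[THEN iffD1])
  then show ?thesis using ne by simp
qed

lemma eps_I: "x \<in> I \<Longrightarrow> eps x = 0"
proof -
  have "two_sided_ideal sc {x. eps x = 0}"
    unfolding two_sided_ideal_def vs.subspace_def by (auto simp: eps0 eps_add eps_scale eps_mult)
  moreover have "\<And>g. group_like sc D g \<Longrightarrow> 1 - g \<in> {x. eps x = 0}"
  proof -
    fix g assume "group_like sc D g"
    moreover have "eps (1 - g) = eps 1 - eps g"
      using eps_add[of 1 "- g"] eps_scale[of "-1" g] by simp
    ultimately show "1 - g \<in> {x. eps x = 0}" by (simp add: eps_group eps1)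
  qed
  ultimately have "I \<subseteq> {x. eps x = 0}" by (rule I_min)
  then show "x \<in> I \<Longrightarrow> eps x = 0" by blast
qed

lemma fs_scale_m1: "fs_scale (-1) t = - (t :: 'x \<Rightarrow> 'k)" unfolding fs_scale_def by (rule ext) simp

lemma coideal: "x \<in> I \<Longrightarrow> \<exists>t. tens_eq2 sc t (D x) \<and> supp t \<subseteq> (I \<times> UNIV) \<union> (UNIV \<times> I)"
proof -
  define J where "J = {x. \<exists>t. tens_eq2 sc t (D x) \<and> supp t \<subseteq> (I \<times> UNIV) \<union> (UNIV \<times> I)}"
  have J0: "0 \<in> J"
  proof -
    have "tens_eq2 sc 0 (D 0) \<and> supp (0 :: 'b \<times> 'b \<Rightarrow> 'k) \<subseteq> (I \<times> UNIV) \<union> (UNIV \<times> I)" using D0 by simp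
    then show ?thesis unfolding J_def by blast
  qed
  have Jadd: "x + y \<in> J" if hx: "x \<in> J" and hy: "y \<in> J" for x y
  proof -
    obtain t where t: "tens_eq2 sc t (D x)" "supp t \<subseteq> (I \<times> UNIV) \<union> (UNIV \<times> I)"
      using hx unfolding J_def by blast
    obtain s where s: "tens_eq2 sc s (D y)" "supp s \<subseteq> (I \<times> UNIV) \<union> (UNIV \<times> I)"
      using hy unfolding J_def by blast
    have "tens_eq2 sc (D x + D y) (D (x + y))"
      using te_sym[OF Dlin[of 1 x y]] unfolding fv.scale_one vs.scale_one .
    then have "tens_eq2 sc (t + s) (D (x + y))"
      using te_trans[OF te_add[OF t(1) s(1)]] by blast
    moreover have "supp (t + s) \<subseteq> (I \<times> UNIV) \<union> (UNIV \<times> I)" using t(2) s(2) supp_add[of t s] by blast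
    ultimately show ?thesis unfolding J_def by blast
  qed
  have Jscale: "sc c x \<in> J" if hx: "x \<in> J" for x c
  proof -
    obtain t where t: "tens_eq2 sc t (D x)" "supp t \<subseteq> (I \<times> UNIV) \<union> (UNIV \<times> I)"
      using hx unfolding J_def by blast
    have "tens_eq2 sc (fs_scale c t + 0) (D (sc c x + 0))"
      using te_trans[OF te_add[OF te_scale[OF t(1)] D0] te_sym[OF Dlin[of c x 0]]] .
    then have "tens_eq2 sc (fs_scale c t) (D (sc c x))" unfolding add_0_right .
    moreover have "supp (fs_scale c t) \<subseteq> (I \<times> UNIV) \<union> (UNIV \<times> I)" using t(2) supp_scale[of c t] by simp
    ultimately show ?thesis unfolding J_def by blast
  qed
  have JmR: "x * b \<in> J" if hx: "x \<in> J" for x b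
  proof -
    obtain t where t: "tens_eq2 sc t (D x)" "supp t \<subseteq> (I \<times> UNIV) \<union> (UNIV \<times> I)"
      using hx unfolding J_def by blast
    have "tens_eq2 sc (fs_mult t (D b)) (fs_mult (D x) (D b))"
      using fs_mult_resp1[OF ml t(1) Dfin] by blast
    then have "tens_eq2 sc (fs_mult t (D b)) (D (x * b))"
      using te_trans te_sym[OF Dmult] by blast
    moreover have "supp (fs_mult t (D b)) \<subseteq> (I \<times> UNIV) \<union> (UNIV \<times> I)"
    proof
      fix z assume "z \<in> supp (fs_mult t (D b))"
      then obtain p q where z: "z = (fst p * fst q, snd p * snd q)" and p: "p \<in> supp t"
        using supp_fs_mult[of t "D b"] by blast
      then have "fst p \<in> I \<or> snd p \<in> I" using t(2) by auto
      then show "z \<in> (I \<times> UNIV) \<union> (UNIV \<times> I)" unfolding z using I_multR by blast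
    qed
    ultimately show ?thesis unfolding J_def by blast
  qed
  have JmL: "b * x \<in> J" if hx: "x \<in> J" for x b
  proof -
    obtain t where t: "tens_eq2 sc t (D x)" "supp t \<subseteq> (I \<times> UNIV) \<union> (UNIV \<times> I)"
      using hx unfolding J_def by blast
    have "tens_eq2 sc (fs_mult (D b) t) (fs_mult (D b) (D x))"
      using fs_mult_resp2[OF mr t(1) Dfin] by blast
    then have "tens_eq2 sc (fs_mult (D b) t) (D (b * x))"
      using te_trans te_sym[OF Dmult] by blast
    moreover have "supp (fs_mult (D b) t) \<subseteq> (I \<times> UNIV) \<union> (UNIV \<times> I)"
    proof
      fix z assume "z \<in> supp (fs_mult (D b) t)"
      then obtain p q where z: "z = (fst p * fst q, snd p * snd q)" and q: "q \<in> supp t"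
        using supp_fs_mult[of "D b" t] by blast
      then have "fst q \<in> I \<or> snd q \<in> I" using t(2) by auto
      then show "z \<in> (I \<times> UNIV) \<union> (UNIV \<times> I)" unfolding z using I_multL by blast
    qed
    ultimately show ?thesis unfolding J_def by blast
  qed
  have Jgen: "1 - g \<in> J" if g: "group_like sc D g" for g
  proof -
    have gI: "1 - g \<in> I" using gen_I[OF g] .
    have tg: "tens_eq2 sc (D g) (delta (g, g))" using g by (simp add: group_like_def)
    have e1: "sc (-1) g + 1 = 1 - g" by simp
    define t :: "'b \<times> 'b \<Rightarrow> 'k" where "t = delta (1 - g, 1) + delta (g, 1 - g)"
    have a1: "tens_eq2 sc t ((fs_scale (-1) (delta (g, 1)) + delta (1, 1)) + (fs_scale (-1) (delta (g, g)) + delta (g, 1)))"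
      unfolding t_def using te_add[OF te_relL[of "-1" g 1 1] te_relR[of g "-1" g 1]] by (simp add: e1)
    have a2: "(fs_scale (-1) (delta (g, 1)) + delta (1, 1)) + (fs_scale (-1) (delta (g, g)) + delta (g, 1))
        = (fs_scale (-1) (delta (g, g)) + delta (1, 1) :: 'b \<times> 'b \<Rightarrow> 'k)"
      by (rule ext) (simp add: fs_scale_def algebra_simps)
    have a3: "tens_eq2 sc (fs_scale (-1) (delta (g, g)) + delta (1, 1)) (D (1 - g))"
      using te_trans[OF te_add[OF te_scale[OF te_sym[OF tg]] te_sym[OF D1]] te_sym[OF Dlin[of "-1" g 1]]]
      by (simp add: e1)
    have "tens_eq2 sc t (D (1 - g))" using te_trans[OF a1[unfolded a2] a3] .
    moreover have "supp t \<subseteq> (I \<times> UNIV) \<union> (UNIV \<times> I)"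
    proof -
      have "supp t \<subseteq> {(1 - g, 1), (g, 1 - g)}"
        unfolding t_def supp_def delta_def by auto
      then show ?thesis using gI by blast
    qed
    ultimately show ?thesis unfolding J_def by blast
  qed
  have "two_sided_ideal sc J"
    unfolding two_sided_ideal_def vs.subspace_def using J0 Jadd Jscale JmR JmL by blast
  then have "I \<subseteq> J" using Jgen by (rule I_min)
  then show "x \<in> I \<Longrightarrow> ?thesis" unfolding J_def by blast
qed

end



context fb begin

definition nf :: "'b \<Rightarrow> 'b" where "nf x = ue x - x"

lemma lin_nf: "lin nf"
  unfolding nf_def
  by (rule linI) (simp_all add: lin_add[OF lin_ue] lin_scale[OF lin_ue] vs.scale_right_diff_distrib)

lemma ue_I: "x \<in> I \<Longrightarrow> ue x = 0" by (simp add: ue_def eps_I)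
lemma nf_I: "x \<in> I \<Longrightarrow> nf x \<in> I" by (simp add: nf_def ue_I I_neg)

lemma nf_F0: "x \<in> F 0 \<Longrightarrow> nf x \<in> I"
proof -
  assume x: "x \<in> F 0"
  obtain G where G: "\<forall>x\<in>G. group_like sc D x" "F 0 = vs.span G" using G0 by blast
  have xs: "x \<in> vs.span G" using x G(2) by simp
  have sub: "vs.subspace {x. nf x \<in> I}"
    unfolding vs.subspace_def
    by (auto simp: lin_0[OF lin_nf] lin_add[OF lin_nf] lin_scale[OF lin_nf] I_0 I_add I_scale)
  show ?thesis
  proof (rule vs.span_induct[OF xs, of "\<lambda>x. nf x \<in> I"])
    show "vs.subspace {x. nf x \<in> I}" by (rule sub)
    fix g assume "g \<in> G"
    then have g: "group_like sc D g" using G(1) by blast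
    have "nf g = 1 - g" unfolding nf_def ue_def eps_group[OF g] by simp
    then show "nf g \<in> I" using gen_I[OF g] by simp
  qed
qed

lemma conv_I:
  assumes u: "lin u" and v: "lin v" and uI: "\<And>y. y \<in> I \<Longrightarrow> u y \<in> I" and vI: "\<And>y. y \<in> I \<Longrightarrow> v y \<in> I"
    and x: "x \<in> I"
  shows "conv u v x \<in> I"
proof -
  obtain t where t: "tens_eq2 sc t (D x)" "supp t \<subseteq> (I \<times> UNIV) \<union> (UNIV \<times> I)" using coideal[OF x] by blast
  have "conv u v x = gc sc (\<lambda>p. u (fst p) * v (snd p)) t" using conv_alt[OF u v t(1)] by simp
  also have "\<dots> \<in> I"
  proof (rule vs.gc_in_sub[OF Isub])
    fix p assume "p \<in> supp t"
    then have "fst p \<in> I \<or> snd p \<in> I" using t(2) by auto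
    then show "u (fst p) * v (snd p) \<in> I" using uI vI I_multR I_multL by blast
  qed
  finally show ?thesis .
qed

primrec gp :: "nat \<Rightarrow> 'b \<Rightarrow> 'b" where
  "gp 0 = ue"
| "gp (Suc k) = conv (gp k) nf"

lemma lin_gp: "lin (gp k)"
proof (induction k)
  case (Suc k) then show ?case using lin_conv[OF Suc lin_nf] by simp
qed (simp add: lin_ue)

lemma gp_I: "x \<in> I \<Longrightarrow> gp k x \<in> I"
proof (induction k arbitrary: x)
  case 0 then show ?case by (simp add: ue_I I_0)
next
  case (Suc k)
  have "conv (gp k) nf x \<in> I" by (rule conv_I[OF lin_gp lin_nf Suc.IH nf_I Suc.prems])
  then show ?case by simp
qed

lemma gp_filt: "\<forall>k>n. \<forall>x\<in>F n. gp k x \<in> I"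
proof (induction n rule: less_induct)
  case (less n)
  show ?case
  proof (intro allI impI ballI)
    fix k x assume k: "n < k" and x: "x \<in> F n"
    obtain j where j: "k = Suc j" using k by (cases k) auto
    have jn: "n \<le> j" using k j by simp
    obtain t where t: "tens_eq2 sc t (D x)" "supp t \<subseteq> (\<Union>i\<le>n. F i \<times> F (n - i))"
      using Ffilt[OF x] by blast
    have "gp k x = conv (gp j) nf x" unfolding j gp.simps ..
    also have "\<dots> = gc sc (\<lambda>p. gp j (fst p) * nf (snd p)) t"
      using conv_alt[OF lin_gp lin_nf t(1)] by blast
    also have "\<dots> \<in> I"
    proof (rule vs.gc_in_sub[OF Isub])
      fix p assume "p \<in> supp t"
      then have "p \<in> (\<Union>i\<le>n. F i \<times> F (n - i))" using t(2) by (rule rev_subsetD)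
      then obtain i where i0: "i \<le> n" "p \<in> F i \<times> F (n - i)" by (rule UN_E) simp
      then have i: "i \<le> n" "fst p \<in> F i" "snd p \<in> F (n - i)" by (auto simp: mem_Times_iff)
      show "gp j (fst p) * nf (snd p) \<in> I"
      proof (cases "i = n")
        case True
        then have "nf (snd p) \<in> I" using i nf_F0 by simp
        then show ?thesis by (rule I_multL)
      next
        case False
        then have "i < n" using i by simp
        have ji: "i < j" using \<open>i < n\<close> jn by simp
        have "\<forall>k>i. \<forall>x\<in>F i. gp k x \<in> I" using less[OF \<open>i < n\<close>] .
        then have "gp j (fst p) \<in> I" using ji i(2) by blast
        then show ?thesis by (rule I_multR)
      qed
    qed
    finally show "gp k x \<in> I" .
  qed
qed

lemma gp_comm: "conv nf (gp k) = conv (gp k) nf"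
proof (induction k)
  case 0
  show ?case by (simp add: conv_unitR conv_unitL lin_nf)
next
  case (Suc k)
  have "conv nf (gp (Suc k)) = conv (conv nf (gp k)) nf"
    by (simp add: conv_assoc lin_nf lin_gp)
  also have "\<dots> = conv (gp (Suc k)) nf" using Suc by simp
  finally show ?case .
qed

definition Gs :: "nat \<Rightarrow> 'b \<Rightarrow> 'b" where "Gs M x = (\<Sum>k\<le>M. gp k x)"

lemma Gs_fun: "Gs M = (\<lambda>x. \<Sum>k\<le>M. gp k x)" by (rule ext) (simp add: Gs_def)

lemma lin_Gs: "lin (Gs M)"
  unfolding Gs_def by (rule linI) (simp_all add: lin_add[OF lin_gp] lin_scale[OF lin_gp] sum.distrib vs.scale_sum_right)

lemma tele: "(\<Sum>k\<le>M. gp k x - gp (Suc k) x) = gp 0 x - gp (Suc M) x"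
  by (induction M) simp_all

lemma idL: "conv (Gs M) (\<lambda>y. y) x = ue x - gp (Suc M) x"
proof -
  have id: "(\<lambda>y. y) = (\<lambda>y. ue y - nf y)" by (simp add: nf_def)
  have "conv (Gs M) (\<lambda>y. y) x = conv (Gs M) ue x - conv (Gs M) nf x"
    unfolding id conv_diffR ..
  also have "conv (Gs M) ue x = Gs M x" by (simp add: conv_unitR lin_Gs)
  also have "conv (Gs M) nf x = (\<Sum>k\<le>M. gp (Suc k) x)"
    unfolding Gs_def conv_sumL by simp
  finally show ?thesis using tele[of x M] by (simp add: Gs_fun sum_subtractf)
qed

lemma idR: "conv (\<lambda>y. y) (Gs M) x = ue x - gp (Suc M) x"
proof -
  have id: "(\<lambda>y. y) = (\<lambda>y. ue y - nf y)" by (simp add: nf_def)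
  have "conv (\<lambda>y. y) (Gs M) x = conv ue (Gs M) x - conv nf (Gs M) x"
    unfolding id conv_diffL ..
  also have "conv ue (Gs M) x = Gs M x" by (simp add: conv_unitL lin_Gs)
  also have "conv nf (Gs M) x = (\<Sum>k\<le>M. gp (Suc k) x)"
    unfolding Gs_def conv_sumR by (simp add: gp_comm)
  finally show ?thesis using tele[of x M] by (simp add: Gs_fun sum_subtractf)
qed

end



context fb begin

interpretation vp: vector_space_pair sc sc ..

definition B0 :: "'b set" where "B0 = vs.extend_basis {}"
lemma indB0: "vs.independent B0" unfolding B0_def by (rule vs.independent_extend_basis[OF vs.independent_empty])
lemma spanB0: "vs.span B0 = UNIV" unfolding B0_def by (rule vs.span_extend_basis[OF vs.independent_empty])

definition Nb :: "'b \<Rightarrow> nat" where "Nb b = (LEAST n. b \<in> F n)"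
lemma Nb: "b \<in> F (Nb b)" unfolding Nb_def by (rule LeastI_ex) (rule Funiv)

definition S :: "'b \<Rightarrow> 'b" where "S = vp.construct B0 (\<lambda>b. Gs (Nb b) b)"

lemma S_linear: "Vector_Spaces.linear sc sc S" unfolding S_def by (rule vp.linear_construct[OF indB0])
lemma lin_S: "lin S"
  using S_linear unfolding linear_iff by (intro linI) auto
lemma S_basis: "b \<in> B0 \<Longrightarrow> S b = Gs (Nb b) b" unfolding S_def by (rule vp.construct_basis[OF indB0])

lemma Gs_Suc: "Gs (Suc M) x = Gs M x + gp (Suc M) x" by (simp add: Gs_def)

lemma Gs_tail0: "x \<in> F N \<Longrightarrow> Gs (N + d) x - Gs N x \<in> I"
proof (induction d)
  case 0 then show ?case by (simp add: I_0)
next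
  case (Suc d)
  have "gp (Suc (N + d)) x \<in> I" using gp_filt[of N] Suc.prems by (auto simp del: gp.simps)
  then have "(Gs (N + d) x - Gs N x) + gp (Suc (N + d)) x \<in> I" using Suc by (simp add: I_add)
  then show ?case by (simp add: Gs_Suc algebra_simps)
qed

lemma Gs_tail: "N \<le> M \<Longrightarrow> x \<in> F N \<Longrightarrow> Gs M x - Gs N x \<in> I"
  using Gs_tail0[of x N "M - N"] by simp

lemma S_approx: "\<exists>N. \<forall>M\<ge>N. S x - Gs M x \<in> I"
proof -
  have xs: "x \<in> vs.span B0" using spanB0 by simp
  show ?thesis
  proof (rule vs.span_induct[OF xs, of "\<lambda>x. \<exists>N. \<forall>M\<ge>N. S x - Gs M x \<in> I"])
    show "vs.subspace {x. \<exists>N. \<forall>M\<ge>N. S x - Gs M x \<in> I}"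
      unfolding vs.subspace_def
    proof (intro conjI ballI allI)
      show "0 \<in> {x. \<exists>N. \<forall>M\<ge>N. S x - Gs M x \<in> I}"
        by (simp add: lin_0[OF lin_S] lin_0[OF lin_Gs] I_0)
    next
      fix x y assume x: "x \<in> {x. \<exists>N. \<forall>M\<ge>N. S x - Gs M x \<in> I}" and y: "y \<in> {x. \<exists>N. \<forall>M\<ge>N. S x - Gs M x \<in> I}"
      obtain N1 where N1: "\<forall>M\<ge>N1. S x - Gs M x \<in> I" using x by blast
      obtain N2 where N2: "\<forall>M\<ge>N2. S y - Gs M y \<in> I" using y by blast
      have "\<forall>M\<ge>max N1 N2. S (x + y) - Gs M (x + y) \<in> I"
      proof (intro allI impI)
        fix M assume "max N1 N2 \<le> M"
        then have "(S x - Gs M x) + (S y - Gs M y) \<in> I" using N1 N2 by (simp add: I_add)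
        then show "S (x + y) - Gs M (x + y) \<in> I" by (simp add: lin_add[OF lin_S] lin_add[OF lin_Gs] algebra_simps)
      qed
      then show "x + y \<in> {x. \<exists>N. \<forall>M\<ge>N. S x - Gs M x \<in> I}" by blast
    next
      fix c x assume x: "x \<in> {x. \<exists>N. \<forall>M\<ge>N. S x - Gs M x \<in> I}"
      obtain N1 where N1: "\<forall>M\<ge>N1. S x - Gs M x \<in> I" using x by blast
      have "\<forall>M\<ge>N1. S (sc c x) - Gs M (sc c x) \<in> I"
      proof (intro allI impI)
        fix M assume "N1 \<le> M"
        then have "sc c (S x - Gs M x) \<in> I" using N1 by (simp add: I_scale)
        then show "S (sc c x) - Gs M (sc c x) \<in> I"
          by (simp add: lin_scale[OF lin_S] lin_scale[OF lin_Gs] vs.scale_right_diff_distrib)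
      qed
      then show "sc c x \<in> {x. \<exists>N. \<forall>M\<ge>N. S x - Gs M x \<in> I}" by blast
    qed
  next
    fix b assume b: "b \<in> B0"
    have "\<forall>M\<ge>Nb b. S b - Gs M b \<in> I"
    proof (intro allI impI)
      fix M assume "Nb b \<le> M"
      then have "Gs M b - Gs (Nb b) b \<in> I" using Gs_tail Nb by blast
      then have "- (Gs M b - Gs (Nb b) b) \<in> I" by (rule I_neg)
      then show "S b - Gs M b \<in> I" using S_basis[OF b] by simp
    qed
    then show "\<exists>N. \<forall>M\<ge>N. S b - Gs M b \<in> I" by blast
  qed
qed

definition Nf :: "'b \<Rightarrow> nat" where "Nf x = (SOME N. \<forall>M\<ge>N. S x - Gs M x \<in> I)"
lemma Nf: "Nf x \<le> M \<Longrightarrow> S x - Gs M x \<in> I"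
  using someI_ex[OF S_approx[of x]] unfolding Nf_def by blast

lemma Gs_I: "x \<in> I \<Longrightarrow> Gs M x \<in> I" unfolding Gs_def by (rule I_sum) (rule gp_I)

lemma S_I: "x \<in> I \<Longrightarrow> S x \<in> I"
proof -
  assume x: "x \<in> I"
  have "(S x - Gs (Nf x) x) + Gs (Nf x) x \<in> I" by (rule I_add[OF Nf[of x "Nf x"] Gs_I[OF x]]) simp
  then show ?thesis by simp
qed

lemma bound:
  obtains M where "\<And>p. p \<in> supp (D x) \<Longrightarrow> Nf (fst p) \<le> M \<and> Nf (snd p) \<le> M" and "\<forall>k>M. gp k x \<in> I"
proof -
  obtain n where n: "x \<in> F n" using Funiv by blast
  define M where "M = n + (\<Sum>p\<in>supp (D x). Nf (fst p) + Nf (snd p))"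
  have "Nf (fst p) \<le> M \<and> Nf (snd p) \<le> M" if p: "p \<in> supp (D x)" for p
  proof -
    have "Nf (fst p) + Nf (snd p) \<le> (\<Sum>p\<in>supp (D x). Nf (fst p) + Nf (snd p))"
      by (rule member_le_sum) (use p Dfin in auto)
    then show ?thesis unfolding M_def by simp
  qed
  moreover have "\<forall>k>M. gp k x \<in> I" using gp_filt[of n] n unfolding M_def by auto
  ultimately show ?thesis using that by blast
qed

lemma antiL: "conv S (\<lambda>y. y) x - ue x \<in> I"
proof -
  obtain M where M: "\<And>p. p \<in> supp (D x) \<Longrightarrow> Nf (fst p) \<le> M \<and> Nf (snd p) \<le> M" and g: "\<forall>k>M. gp k x \<in> I"
    using bound by blast
  have "conv (\<lambda>y. S y - Gs M y) (\<lambda>y. y) x = gc sc (\<lambda>p. (S (fst p) - Gs M (fst p)) * snd p) (D x)"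
    unfolding conv_gc ..
  also have "\<dots> \<in> I"
  proof (rule vs.gc_in_sub[OF Isub])
    fix p assume "p \<in> supp (D x)"
    then have "S (fst p) - Gs M (fst p) \<in> I" using M Nf by blast
    then show "(S (fst p) - Gs M (fst p)) * snd p \<in> I" by (rule I_multR)
  qed
  finally have 1: "conv S (\<lambda>y. y) x - conv (Gs M) (\<lambda>y. y) x \<in> I" unfolding conv_diffL .
  have 2: "conv (Gs M) (\<lambda>y. y) x - ue x \<in> I"
  proof -
    have "gp (Suc M) x \<in> I" using g by blast
    then have "- gp (Suc M) x \<in> I" by (rule I_neg)
    then show ?thesis unfolding idL by simp
  qed
  show ?thesis using I_add[OF 1 2] by simp
qed

lemma antiR: "conv (\<lambda>y. y) S x - ue x \<in> I"
proof -
  obtain M where M: "\<And>p. p \<in> supp (D x) \<Longrightarrow> Nf (fst p) \<le> M \<and> Nf (snd p) \<le> M" and g: "\<forall>k>M. gp k x \<in> I"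
    using bound by blast
  have "conv (\<lambda>y. y) (\<lambda>y. S y - Gs M y) x = gc sc (\<lambda>p. fst p * (S (snd p) - Gs M (snd p))) (D x)"
    unfolding conv_gc ..
  also have "\<dots> \<in> I"
  proof (rule vs.gc_in_sub[OF Isub])
    fix p assume "p \<in> supp (D x)"
    then have "S (snd p) - Gs M (snd p) \<in> I" using M Nf by blast
    then show "fst p * (S (snd p) - Gs M (snd p)) \<in> I" by (rule I_multL)
  qed
  finally have 1: "conv (\<lambda>y. y) S x - conv (\<lambda>y. y) (Gs M) x \<in> I" unfolding conv_diffR .
  have 2: "conv (\<lambda>y. y) (Gs M) x - ue x \<in> I"
  proof -
    have "gp (Suc M) x \<in> I" using g by blast
    then have "- gp (Suc M) x \<in> I" by (rule I_neg)
    then show ?thesis unfolding idR by simp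
  qed
  show ?thesis using I_add[OF 1 2] by simp
qed

lemma qcls_eq: "x - y \<in> I \<Longrightarrow> qcls I x = qcls I y"
proof -
  assume d: "x - y \<in> I"
  have "qcls I a \<subseteq> qcls I b" if "a - b \<in> I" for a b
  proof
    fix z assume "z \<in> qcls I a"
    then obtain w where w: "z = a + w" "w \<in> I" unfolding qcls_def by blast
    then have "(a - b) + w \<in> I" using that by (simp add: I_add)
    moreover have "z = b + ((a - b) + w)" using w by simp
    ultimately show "z \<in> qcls I b" unfolding qcls_def by blast
  qed
  moreover have "y - x \<in> I" using I_neg[OF d] by simp
  ultimately show ?thesis using d by blast
qed

lemma main:
  "two_sided_ideal sc I \<and> two_sided_coideal sc D eps I
   \<and> qcls I ` F 0 = qcls I ` range (\<lambda>c. sc c 1) \<and> quotient_has_antipode sc D eps I"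
proof (intro conjI)
  show "two_sided_ideal sc I" by (rule ideal_I)
  show "two_sided_coideal sc D eps I"
    unfolding two_sided_coideal_def using coideal eps_I by blast
  show "qcls I ` F 0 = qcls I ` range (\<lambda>c. sc c 1)"
  proof
    show "qcls I ` F 0 \<subseteq> qcls I ` range (\<lambda>c. sc c 1)"
    proof
      fix z assume "z \<in> qcls I ` F 0"
      then obtain y where y: "y \<in> F 0" "z = qcls I y" by blast
      have "nf y \<in> I" using nf_F0[OF y(1)] .
      then have "- nf y \<in> I" by (rule I_neg)
      then have "y - sc (eps y) 1 \<in> I" unfolding nf_def ue_def by simp
      then have "qcls I y = qcls I (sc (eps y) 1)" by (rule qcls_eq)
      then show "z \<in> qcls I ` range (\<lambda>c. sc c 1)" using y(2) by blast
    qed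
    show "qcls I ` range (\<lambda>c. sc c 1) \<subseteq> qcls I ` F 0"
    proof
      fix z assume "z \<in> qcls I ` range (\<lambda>c. sc c 1)"
      then obtain c where c: "z = qcls I (sc c 1)" by blast
      have "sc c 1 \<in> F 0" using vs.subspace_scale[OF Fsub one_F0] .
      then show "z \<in> qcls I ` F 0" using c by blast
    qed
  qed
  show "quotient_has_antipode sc D eps I"
    unfolding quotient_has_antipode_def
  proof (intro exI conjI allI)
    show "Vector_Spaces.linear sc sc S" by (rule S_linear)
    show "S ` I \<subseteq> I" using S_I by blast
    fix x
    show "contract sc (\<lambda>a b. S a * b) (D x) - sc (eps x) 1 \<in> I"
      using antiL[of x] unfolding conv_def ue_def .
  next
    fix x
    show "contract sc (\<lambda>a b. a * S b) (D x) - sc (eps x) 1 \<in> I"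
      using antiR[of x] unfolding conv_def ue_def .
  qed
qed

end

theorem lemma3p5:
  fixes sc :: "'k::field \<Rightarrow> 'b::ring_1 \<Rightarrow> 'b"
    and D :: "'b \<Rightarrow> ('b \<times> 'b \<Rightarrow> 'k)"
    and eps :: "'b \<Rightarrow> 'k"
    and F :: "nat \<Rightarrow> 'b set"
  assumes "filtered_bialgebra sc D eps F"
    and "\<exists>G. (\<forall>x\<in>G. group_like sc D x) \<and> F 0 = module.span sc G"
  shows "two_sided_ideal sc (ideal_generated sc {1 - x | x. group_like sc D x})
       \<and> two_sided_coideal sc D eps (ideal_generated sc {1 - x | x. group_like sc D x})
       \<and> qcls (ideal_generated sc {1 - x | x. group_like sc D x}) ` F 0
           = qcls (ideal_generated sc {1 - x | x. group_like sc D x}) ` range (\<lambda>c. sc c 1)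
       \<and> quotient_has_antipode sc D eps (ideal_generated sc {1 - x | x. group_like sc D x})"
proof -
  have vs: "vector_space sc" using assms(1) by (simp add: filtered_bialgebra_def bialgebra_def)
  have "fb sc D eps F" unfolding fb_def fb_axioms_def using vs assms by blast
  then interpret fb sc D eps F .
  show ?thesis using main unfolding I_def .
qed



end
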